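(* Let $\mathcal{X}=\{1,\ldots,d\}$, let $\mathcal{S}$ be the probability simplex in $\mathbb{R}^d$ (identified with probability measures on $\mathcal{X}$), $\mathcal{S}^\circ=\{p\in\mathcal{S}:p_x>0\ \forall x\}$, and $\mathcal{H}_0=\{v\in\mathbb{R}^d:\sum_x v_x=0\}$. Let $K:\mathcal{X}\times\mathbb{R}^d\to\mathbb{R}$ be such that each $K^x(\cdot)=K(x,\cdot)$ is continuously differentiable on $\mathbb{R}^d$, and let $(\alpha(x,y))_{x,y\in\mathcal{X}}$ be an irreducible symmetric matrix with zero diagonal and off-diagonal entries in $\{0,1\}$. Define $$H^x(p)=K^x(p)+\sum_{z\in\mathcal{X}}\Big(\frac{\partial}{\partial p_x}K^z(p)\Big)p_z,\qquad \Psi(x,y,p)=H^y(p)-H^x(p),$$ $$\Gamma_{xy}(p)=e^{-(\Psi(x,y,p))^+}\alpha(x,y)\ (x\ne y),\qquad \Gamma_{xx}(p)=-\sum_{y\ne x}\Gamma_{xy}(p),$$ and $F(p)=\sum_{x\in\mathcal{X}}(K^x(p)+\log p_x)p_x$ for $p\in\mathcal{S}$. Let $p\in\mathcal{S}$. Then $p$ is a fixed point of the ODE $\frac{d}{dt}p(t)=p(t)\Gamma(p(t))$ (i.e. $p\Gamma(p)=0$) if and only if $p\in\mathcal{S}^\circ$ and $\frac{\partial}{\partial v}F(p)=0$ for all $v\in\mathcal{H}_0$.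
   Context: $\alpha$ irreducible means the graph on $\mathcal{X}$ with edges $\{x,y\}$ where $\alpha(x,y)=1$ is connected. For $p\in\mathcal{S}^\circ$ and $v\in\mathcal{H}_0$, $\frac{\partial}{\partial v}F(p)=\frac{d}{ds}F(p+sv)\big|_{s=0}$ denotes the directional derivative of $F$ (the formula defining $F$ makes sense for all vectors with positive entries). *)

theory Defs
  imports "HOL-Analysis.Analysis"
begin

text \<open>The state space X = {1..d} is modelled by a finite type 'n; vectors in R^d are
  real^'n.  K x q is K^x(q).\<close>

definition prob_simplex :: "(real^'n::finite) set" where
  "prob_simplex = {p. (\<forall>x. p $ x \<ge> 0) \<and> (\<Sum>x\<in>UNIV. p $ x) = 1}"

definition prob_simplex_interior :: "(real^'n::finite) set" where
  "prob_simplex_interior = {p. p \<in> prob_simplex \<and> (\<forall>x. p $ x > 0)}"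

definition H0 :: "(real^'n::finite) set" where
  "H0 = {v. (\<Sum>x\<in>UNIV. v $ x) = 0}"

definition partial :: "((real^'n::finite) \<Rightarrow> real) \<Rightarrow> 'n \<Rightarrow> real^'n \<Rightarrow> real" where
  "partial f i q = frechet_derivative f (at q) (axis i 1)"

definition Hf :: "('n::finite \<Rightarrow> real^'n \<Rightarrow> real) \<Rightarrow> 'n \<Rightarrow> real^'n \<Rightarrow> real" where
  "Hf K x p = K x p + (\<Sum>z\<in>UNIV. partial (K z) x p * p $ z)"

definition Psi :: "('n::finite \<Rightarrow> real^'n \<Rightarrow> real) \<Rightarrow> 'n \<Rightarrow> 'n \<Rightarrow> real^'n \<Rightarrow> real" where
  "Psi K x y p = Hf K y p - Hf K x p"

definition Gamma :: "('n::finite \<Rightarrow> real^'n \<Rightarrow> real) \<Rightarrow> ('n \<Rightarrow> 'n \<Rightarrow> real)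
    \<Rightarrow> real^'n \<Rightarrow> 'n \<Rightarrow> 'n \<Rightarrow> real" where
  "Gamma K \<alpha> p x y =
     (if x = y then - (\<Sum>y'\<in>UNIV - {x}. exp (- max 0 (Psi K x y' p)) * \<alpha> x y')
      else exp (- max 0 (Psi K x y p)) * \<alpha> x y)"

definition Ffun :: "('n::finite \<Rightarrow> real^'n \<Rightarrow> real) \<Rightarrow> real^'n \<Rightarrow> real" where
  "Ffun K p = (\<Sum>x\<in>UNIV. (K x p + ln (p $ x)) * p $ x)"

definition irreducible_adj :: "('n \<Rightarrow> 'n \<Rightarrow> real) \<Rightarrow> bool" where
  "irreducible_adj \<alpha> = (\<forall>x y. (x, y) \<in> {(a, b). \<alpha> a b = 1}\<^sup>*)"

definition is_fixed_point :: "('n::finite \<Rightarrow> real^'n \<Rightarrow> real) \<Rightarrow> ('n \<Rightarrow> 'n \<Rightarrow> real)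
    \<Rightarrow> real^'n \<Rightarrow> bool" where
  "is_fixed_point K \<alpha> p = (\<forall>y. (\<Sum>x\<in>UNIV. p $ x * Gamma K \<alpha> p x y) = 0)"

end

theory Submission imports Defs begin

lemma lin_expand:
  fixes f :: "real^'n::finite \<Rightarrow> real"
  assumes "linear f"
  shows "f v = (\<Sum>w\<in>UNIV. v$w * f (axis w 1))"
proof -
  have "f v = f (\<Sum>w\<in>UNIV. v$w *\<^sub>R axis w 1)"
    using basis_expansion[of v] by (simp add: scalar_mult_eq_scaleR)
  also have "\<dots> = (\<Sum>w\<in>UNIV. v$w * f (axis w 1))"
    by (simp add: linear_sum[OF assms] linear_scale[OF assms])
  finally show ?thesis .
qed

lemma deriv_K:
  fixes g :: "real^'n::finite \<Rightarrow> real"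
  assumes "g differentiable (at p)"
  shows "((\<lambda>s. g (p + s *\<^sub>R v)) has_real_derivative (\<Sum>w\<in>UNIV. v$w * partial g w p)) (at 0)"
proof -
  have d: "(g has_derivative frechet_derivative g (at p)) (at p)"
    using assms frechet_derivative_works by blast
  have lin: "linear (frechet_derivative g (at p))"
    using d has_derivative_linear by blast
  have l: "((\<lambda>s::real. p + s *\<^sub>R v) has_derivative (\<lambda>s. s *\<^sub>R v)) (at 0)"
    by (auto intro!: derivative_eq_intros)
  have "((\<lambda>s. g (p + s *\<^sub>R v)) has_derivative (\<lambda>s. frechet_derivative g (at p) (s *\<^sub>R v))) (at 0)"
    using diff_chain_at[OF l, of g] d by (simp add: o_def)
  moreover have "(\<lambda>s. frechet_derivative g (at p) (s *\<^sub>R v)) = (\<lambda>s. (\<Sum>w\<in>UNIV. v$w * partial g w p) * s)"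
    by (simp add: linear_scale[OF lin] lin_expand[OF lin, of v] partial_def mult.commute)
  ultimately show ?thesis unfolding has_field_derivative_def by (metis (no_types, lifting) ext mult.commute)
qed

lemma deriv_F:
  fixes K :: "'n::finite \<Rightarrow> real^'n \<Rightarrow> real"
  assumes kd: "\<And>x. K x differentiable (at p)" and pp: "\<And>x. p$x > 0"
  shows "((\<lambda>s. Ffun K (p + s *\<^sub>R v)) has_real_derivative
           (\<Sum>w\<in>UNIV. v$w * (Hf K w p + ln (p$w) + 1))) (at 0)"
proof -
  define D where "D x = (\<Sum>w\<in>UNIV. v$w * partial (K x) w p)" for x
  have t: "((\<lambda>s. (K x (p + s *\<^sub>R v) + ln ((p + s *\<^sub>R v)$x)) * (p + s *\<^sub>R v)$x)
     has_real_derivative ((D x + v$x / p$x) * p$x + (K x p + ln (p$x)) * v$x)) (at 0)" for x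
  proof -
    have a: "((\<lambda>s. K x (p + s *\<^sub>R v)) has_real_derivative D x) (at 0)"
      unfolding D_def by (rule deriv_K[OF kd])
    have b: "((\<lambda>s. (p + s *\<^sub>R v)$x) has_real_derivative v$x) (at 0)"
      by (auto intro!: derivative_eq_intros)
    have c: "((\<lambda>s. ln ((p + s *\<^sub>R v)$x)) has_real_derivative v$x / p$x) (at 0)"
      using pp[of x] by (auto intro!: derivative_eq_intros simp: field_simps)
    have m: "((\<lambda>s. (K x (p + s *\<^sub>R v) + ln ((p + s *\<^sub>R v)$x)) * (p + s *\<^sub>R v)$x)
     has_real_derivative ((D x + v$x / p$x) * (p + 0 *\<^sub>R v)$x + v$x * (K x (p + 0 *\<^sub>R v) + ln ((p + 0 *\<^sub>R v)$x)))) (at 0)"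
      by (rule DERIV_mult[OF DERIV_add[OF a c] b])
    have eq: "(D x + v$x / p$x) * (p + 0 *\<^sub>R v)$x + v$x * (K x (p + 0 *\<^sub>R v) + ln ((p + 0 *\<^sub>R v)$x))
       = (D x + v$x / p$x) * p$x + (K x p + ln (p$x)) * v$x" by (simp add: mult.commute)
    from m show ?thesis unfolding eq .
  qed
  have "((\<lambda>s. Ffun K (p + s *\<^sub>R v)) has_real_derivative
      (\<Sum>x\<in>UNIV. (D x + v$x / p$x) * p$x + (K x p + ln (p$x)) * v$x)) (at 0)"
    unfolding Ffun_def by (intro DERIV_sum t)
  moreover have "(\<Sum>x\<in>UNIV. (D x + v$x / p$x) * p$x + (K x p + ln (p$x)) * v$x)
     = (\<Sum>w\<in>UNIV. v$w * (Hf K w p + ln (p$w) + 1))"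
  proof -
    have e1: "(D x + v$x / p$x) * p$x + (K x p + ln (p$x)) * v$x
       = D x * p$x + v$x * (K x p + ln (p$x) + 1)" for x
      using pp[of x] by (simp add: field_simps)
    have e2: "(\<Sum>x\<in>UNIV. D x * p$x) = (\<Sum>w\<in>UNIV. v$w * (\<Sum>z\<in>UNIV. partial (K z) w p * p$z))"
      unfolding D_def sum_distrib_left sum_distrib_right
      by (subst sum.swap) (simp add: mult.commute mult.left_commute)
    have pnz: "\<And>x. p$x \<noteq> 0" using pp by (metis less_irrefl)
    show ?thesis
      by (simp add: pnz e1 sum.distrib e2 Hf_def distrib_left algebra_simps)
  qed
  ultimately show ?thesis by simp
qed

lemma max_shift: "- max 0 (b - a) = a - max a (b::real)"
  by (simp add: max_def)

lemma fp_sum: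
  fixes K :: "'n::finite \<Rightarrow> real^'n \<Rightarrow> real" and p :: "real^'n" and \<alpha> :: "'n \<Rightarrow> 'n \<Rightarrow> real"
  assumes sym: "\<And>x y. \<alpha> x y = \<alpha> y x"
  defines "c \<equiv> \<lambda>x y. exp (- max (Hf K x p) (Hf K y p)) * \<alpha> x y"
    and "h \<equiv> \<lambda>x. p$x * exp (Hf K x p)"
  shows "(\<Sum>x\<in>UNIV. p $ x * Gamma K \<alpha> p x y) = (\<Sum>x\<in>UNIV. c x y * (h x - h y))"
proof -
  define Q where "Q x y = exp (- max 0 (Psi K x y p)) * \<alpha> x y" for x y
  have pq: "p$x * Q x y = h x * c x y" for x y
    unfolding Q_def h_def c_def Psi_def max_shift
    by (simp add: exp_diff exp_minus field_simps)
  have pq2: "p$y * Q y x = h y * c x y" for x y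
    unfolding pq c_def by (simp add: sym max.commute)
  have fin: "finite (UNIV - {y})" by simp
  have "(\<Sum>x\<in>UNIV. p $ x * Gamma K \<alpha> p x y)
      = p$y * Gamma K \<alpha> p y y + (\<Sum>x\<in>UNIV - {y}. p $ x * Gamma K \<alpha> p x y)"
    by (simp add: sum.remove[of UNIV y])
  also have "(\<Sum>x\<in>UNIV - {y}. p $ x * Gamma K \<alpha> p x y) = (\<Sum>x\<in>UNIV - {y}. h x * c x y)"
    by (rule sum.cong) (auto simp: Gamma_def pq[symmetric] Q_def)
  also have "p$y * Gamma K \<alpha> p y y = - (\<Sum>x\<in>UNIV - {y}. h y * c x y)"
    by (simp add: Gamma_def sum_distrib_left pq2[symmetric] Q_def)
  also have "- (\<Sum>x\<in>UNIV - {y}. h y * c x y) + (\<Sum>x\<in>UNIV - {y}. h x * c x y)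
      = (\<Sum>x\<in>UNIV - {y}. c x y * (h x - h y))"
    by (simp add: sum_subtractf[symmetric] algebra_simps)
  also have "\<dots> = (\<Sum>x\<in>UNIV. c x y * (h x - h y))"
    by (simp add: sum.remove[of UNIV y])
  finally show ?thesis .
qed

theorem theorem4p1:
  fixes K :: "'n::finite \<Rightarrow> real^'n \<Rightarrow> real"
    and \<alpha> :: "'n \<Rightarrow> 'n \<Rightarrow> real"
    and p :: "real^'n"
  assumes K_diff: "\<And>x q. K x differentiable (at q)"
    and K_C1: "\<And>x i. continuous_on UNIV (partial (K x) i)"
    and \<alpha>_01: "\<And>x y. \<alpha> x y \<in> {0, 1}"
    and \<alpha>_sym: "\<And>x y. \<alpha> x y = \<alpha> y x"
    and \<alpha>_diag: "\<And>x. \<alpha> x x = 0"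
    and \<alpha>_irr: "irreducible_adj \<alpha>"
    and p_S: "p \<in> prob_simplex"
  shows "is_fixed_point K \<alpha> p \<longleftrightarrow>
         (p \<in> prob_simplex_interior \<and>
          (\<forall>v\<in>H0. ((\<lambda>s. Ffun K (p + s *\<^sub>R v)) has_real_derivative 0) (at 0)))"
proof -
  define c where "c \<equiv> \<lambda>x y. exp (- max (Hf K x p) (Hf K y p)) * \<alpha> x y"
  define h where "h \<equiv> \<lambda>x. p$x * exp (Hf K x p)"
  have fp: "is_fixed_point K \<alpha> p \<longleftrightarrow> (\<forall>y. (\<Sum>x\<in>UNIV. c x y * (h x - h y)) = 0)"
    unfolding is_fixed_point_def c_def h_def using fp_sum[where \<alpha>=\<alpha> and K=K and p=p, OF \<alpha>_sym] by simp
  have pnn: "\<And>x. p$x \<ge> 0" and psum: "(\<Sum>x\<in>UNIV. p $ x) = 1"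
    using p_S by (auto simp: prob_simplex_def)
  have cnn: "c x y \<ge> 0" for x y using \<alpha>_01[of x y] by (auto simp: c_def)
  have cpos: "\<alpha> x y = 1 \<Longrightarrow> c x y > 0" for x y by (simp add: c_def)
  show ?thesis
  proof
    assume fxp: "is_fixed_point K \<alpha> p"
    define m where "m = Max (range h)"
    have "m \<in> range h" unfolding m_def by (rule Max_in) auto
    then obtain y0 where y0: "h y0 = m" by auto
    have hle: "h x \<le> m" for x unfolding m_def by simp
    have step1: "h b = m" if ha: "h a = m" and ab: "\<alpha> a b = 1" for a b
    proof -
      have "(\<Sum>x\<in>UNIV. c x a * (h a - h x)) = 0"
        using fxp fp by (simp add: right_diff_distrib sum_subtractf)
      moreover have "\<forall>x\<in>UNIV. 0 \<le> c x a * (h a - h x)"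
        using cnn hle ha by simp
      ultimately have "c b a * (h a - h b) = 0"
        using sum_nonneg_eq_0_iff[of UNIV "\<lambda>x. c x a * (h a - h x)"] by simp
      moreover have "c b a > 0" using cpos ab \<alpha>_sym by metis
      ultimately show ?thesis using ha by simp
    qed
    have hall: "h x = m" for x
    proof -
      have "(y0, x) \<in> {(a, b). \<alpha> a b = 1}\<^sup>*" using \<alpha>_irr unfolding irreducible_adj_def by blast
      then show ?thesis
      proof (induction rule: rtrancl_induct)
        case base then show ?case by (rule y0)
      next
        case (step y z) then show ?case using step1[of y z] by simp
      qed
    qed
    define H where "H w = Hf K w p" for w
    have px: "p$x = m * exp (- H x)" for x
      using hall[of x] by (simp add: h_def H_def exp_minus field_simps)
    have "m \<ge> 0" using hall[of y0] pnn[of y0] by (metis h_def exp_ge_zero zero_le_mult_iff)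
    moreover have "m \<noteq> 0"
    proof
      assume "m = 0"
      then have "\<And>x. p$x = 0" using px by simp
      then show False using psum by simp
    qed
    ultimately have mpos: "m > 0" by simp
    have ppos: "p$x > 0" for x using px mpos by simp
    have int: "p \<in> prob_simplex_interior"
      using p_S ppos by (simp add: prob_simplex_interior_def)
    have "((\<lambda>s. Ffun K (p + s *\<^sub>R v)) has_real_derivative 0) (at 0)" if v: "v \<in> H0" for v
    proof -
      have d: "((\<lambda>s. Ffun K (p + s *\<^sub>R v)) has_real_derivative
           (\<Sum>w\<in>UNIV. v$w * (Hf K w p + ln (p$w) + 1))) (at 0)"
        by (rule deriv_F[OF K_diff ppos])
      have "(\<Sum>w\<in>UNIV. v$w * (Hf K w p + ln (p$w) + 1)) = (\<Sum>w\<in>UNIV. v$w * (ln m + 1))"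
      proof (rule sum.cong)
        fix w
        have "ln (p$w) = ln m - H w" using mpos by (simp only: px ln_mult) simp
        then show "v$w * (Hf K w p + ln (p$w) + 1) = v$w * (ln m + 1)" by (simp add: H_def)
      qed simp
      also have "\<dots> = 0" using v by (simp add: H0_def sum_distrib_right[symmetric])
      finally show ?thesis using d by simp
    qed
    then show "p \<in> prob_simplex_interior \<and>
          (\<forall>v\<in>H0. ((\<lambda>s. Ffun K (p + s *\<^sub>R v)) has_real_derivative 0) (at 0))"
      using int by blast
  next
    assume rhs: "p \<in> prob_simplex_interior \<and>
          (\<forall>v\<in>H0. ((\<lambda>s. Ffun K (p + s *\<^sub>R v)) has_real_derivative 0) (at 0))"
    have ppos: "p$x > 0" for x using rhs by (simp add: prob_simplex_interior_def)
    define g where "g w = Hf K w p + ln (p$w) + 1" for w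
    have geq: "g a = g b" for a b
    proof -
      define v :: "real^'n" where "v = axis a 1 - axis b 1"
      have vc: "v$w = (if w = a then 1 else 0) - (if w = b then 1 else 0)" for w
        by (simp add: v_def axis_def)
      have "v \<in> H0" by (simp add: H0_def vc sum_subtractf)
      then have d0: "((\<lambda>s. Ffun K (p + s *\<^sub>R v)) has_real_derivative 0) (at 0)" using rhs by blast
      have d: "((\<lambda>s. Ffun K (p + s *\<^sub>R v)) has_real_derivative (\<Sum>w\<in>UNIV. v$w * g w)) (at 0)"
        unfolding g_def by (rule deriv_F[OF K_diff ppos])
      have "(\<Sum>w\<in>UNIV. v$w * g w) = 0" using DERIV_unique[OF d d0] .
      moreover have "(\<Sum>w\<in>UNIV. v$w * g w) = g a - g b"
      proof -
        have "v$w * g w = (if w = a then g w else 0) - (if w = b then g w else 0)" for w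
          by (simp add: vc)
        then show ?thesis by (simp add: sum_subtractf)
      qed
      ultimately show ?thesis by simp
    qed
    have hab: "h a = h b" for a b
    proof -
      have "h x = exp (g x - 1)" for x
        using ppos[of x] by (simp add: h_def g_def exp_add)
      then show ?thesis using geq[of a b] by presburger
    qed
    have "(\<Sum>x\<in>UNIV. c x y * (h x - h y)) = 0" for y
    proof -
      have "\<forall>x\<in>UNIV. c x y * (h x - h y) = 0"
      proof
        fix x show "c x y * (h x - h y) = 0" using hab[of x y] by simp
      qed
      then show ?thesis by (rule sum.neutral)
    qed
    then show "is_fixed_point K \<alpha> p" using fp by blast
  qed
qed

end
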